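(* Let $\mathbf H_\Lambda(0)$ and $\mathbf H_\Lambda(1)$ be quadratic and strictly positive Hamiltonians on $\mathcal F(\mathbb C^L)$, with associated real skew-symmetric matrices $A_\Lambda(0)$, $A_\Lambda(1)$. Then $j(\mathbf H_\Lambda(0))=j(\mathbf H_\Lambda(1))$ if and only if $\mathrm{Sf}_2(A_\Lambda(0),A_\Lambda(1))=1$.
   Context: $\mathcal F(\mathbb C^L)$ is the fermionic Fock space over $\Lambda=\{1,\dots,L\}$ with creation/annihilation operators ${\mathfrak a}_j^*,{\mathfrak a}_j$ satisfying the CAR. Fix $\theta\in\mathbb R$ and define Majorana operators ${\mathfrak b}_{2j-1}=e^{i\theta/2}{\mathfrak a}_j+e^{-i\theta/2}{\mathfrak a}_j^*$, ${\mathfrak b}_{2j}=-ie^{i\theta/2}{\mathfrak a}_j+ie^{-i\theta/2}{\mathfrak a}_j^*$, and the column vector ${\mathfrak b}=({\mathfrak b}_1,{\mathfrak b}_3,\dots,{\mathfrak b}_{2L-1},{\mathfrak b}_2,{\mathfrak b}_4,\dots,{\mathfrak b}_{2L})^t$. A quadratic Hamiltonian $\mathbf H_\Lambda=\sum_{j,k}h_{jk}{\mathfrak a}_j^*{\mathfrak a}_k+\tilde h_{jk}{\mathfrak a}_j{\mathfrak a}_k+\text{adjoint}$ can be written (up to an additive constant) as $\mathbf H_\Lambda=\frac i2{\mathfrak b}^tA_\Lambda{\mathfrak b}$ with a unique real skew-symmetric $2L\times2L$ matrix $A_\Lambda$. It is strictly positive if $A_\Lambda$ is invertible (equivalently, all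 single-particle energies $E_j$ in the normal form $VA_\Lambda V^*=\begin{pmatrix}0&E\\-E&0\end{pmatrix}$, $V$ orthogonal, $E=\mathrm{diag}(E_1,\dots,E_L)\ge0$, are strictly positive). Kitaev index: $j(\mathbf H_\Lambda)=\mathrm{sgn}\,\mathrm{Pf}(A_\Lambda)$. Finite-dimensional $\mathbb Z_2$-valued spectral flow: for invertible real skew-symmetric matrices $T_0,T_1$, choose an invertible real $M$ with $T_1=MT_0M^*$ and set $\mathrm{Sf}_2(T_0,T_1)=\mathrm{sgn}\det(M)$. *)

theory Defs
  imports "Jordan_Normal_Form.Determinant"
begin

definition skew_symmetric_mat :: "nat \<Rightarrow> real mat \<Rightarrow> bool" where
  "skew_symmetric_mat n A \<longleftrightarrow> A \<in> carrier_mat n n \<and> transpose_mat A = - A"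

definition pfaffian :: "nat \<Rightarrow> real mat \<Rightarrow> real" where
  "pfaffian L A = (\<Sum>\<sigma> \<in> {p. p permutes {0..<2*L}}.
      signof \<sigma> * (\<Prod>i<L. A $$ (\<sigma> (2*i), \<sigma> (2*i+1)))) / (2 ^ L * fact L)"

text \<open>Kitaev index of the quadratic Hamiltonian with associated matrix A on F(C^L):
  j = sgn Pf(A).\<close>
definition kitaev_index :: "nat \<Rightarrow> real mat \<Rightarrow> real" where
  "kitaev_index L A = sgn (pfaffian L A)"

definition spectral_flow2 :: "nat \<Rightarrow> real mat \<Rightarrow> real mat \<Rightarrow> real" where
  "spectral_flow2 n T0 T1 = sgn (det (SOME M. M \<in> carrier_mat n n \<and> invertible_mat M
      \<and> T1 = M * T0 * transpose_mat M))"

end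

theory Submission
  imports Defs
begin


lemma cong_entry:
  assumes A: "A \<in> carrier_mat n n" and N: "N \<in> carrier_mat n n" and i: "i<n" and j: "j<n"
  shows "(N * A * transpose_mat N) $$ (i,j) = (\<Sum>a<n. \<Sum>b<n. N$$(i,a) * A$$(a,b) * N$$(j,b))"
proof -
  have "(N * A * transpose_mat N) $$ (i,j) = (\<Sum>a<n. \<Sum>b<n. N$$(i,a) * (A$$(a,b) * N$$(j,b)))"
    using A N i j by (simp add: scalar_prod_def atLeast0LessThan sum_distrib_left)
  then show ?thesis by (simp add: mult.assoc)
qed

lemma inv_iff_det:
  assumes A: "(A::real mat) \<in> carrier_mat n n"
  shows "invertible_mat A \<longleftrightarrow> det A \<noteq> 0"
proof
  assume "invertible_mat A"
  then obtain B where AB: "A * B = 1\<^sub>m n" and BA: "B * A = 1\<^sub>m (dim_row B)"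
    using A unfolding invertible_mat_def inverts_mat_def by auto
  have "dim_col B = n" using AB A by (metis index_mult_mat(3) index_one_mat(3))
  moreover have "dim_row B = n" using BA A by (metis index_mult_mat(3) index_one_mat(3) carrier_matD(2))
  ultimately have B: "B \<in> carrier_mat n n" by auto
  from arg_cong[OF AB, of det] det_mult[OF A B] show "det A \<noteq> 0" by auto
next
  assume "det A \<noteq> 0"
  from det_non_zero_imp_unit[OF A this, of undefined]
  obtain B where B: "B \<in> carrier_mat n n" and "B * A = 1\<^sub>m n" "A * B = 1\<^sub>m n"
    unfolding Units_def ring_mat_def by auto
  then show "invertible_mat A" using A unfolding invertible_mat_def inverts_mat_def square_mat.simps
    by auto
qed

lemma inverse_exists:
  assumes A: "(A::real mat) \<in> carrier_mat n n" and d: "det A \<noteq> 0"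
  shows "\<exists>B \<in> carrier_mat n n. B * A = 1\<^sub>m n \<and> A * B = 1\<^sub>m n"
  using det_non_zero_imp_unit[OF A d, of undefined]
  unfolding Units_def ring_mat_def by auto



lemma prod_pair_expand:
  fixes G :: "nat \<Rightarrow> nat \<Rightarrow> nat \<Rightarrow> real"
  shows "(\<Prod>i<L. \<Sum>a<n. \<Sum>b<n. G i a b) =
    (\<Sum>f \<in> PiE {..<2*L} (\<lambda>_. {..<n}). \<Prod>i<L. G i (f (2*i)) (f (2*i+1)))"
proof -
  have "(\<Prod>i<L. \<Sum>a<n. \<Sum>b<n. G i a b) = (\<Prod>i<L. \<Sum>q\<in>{..<n}\<times>{..<n}. G i (fst q) (snd q))"
    by (simp add: sum.cartesian_product split_def)
  also have "\<dots> = (\<Sum>p\<in>PiE {..<L} (\<lambda>_. {..<n}\<times>{..<n}). \<Prod>i<L. G i (fst (p i)) (snd (p i)))"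
    by (rule prod_sum_PiE) auto
  also have "\<dots> = (\<Sum>f \<in> PiE {..<2*L} (\<lambda>_. {..<n}). \<Prod>i<L. G i (f (2*i)) (f (2*i+1)))"
  proof (rule sum.reindex_bij_witness[of _
        "\<lambda>f i. if i < L then (f (2*i), f (2*i+1)) else undefined"
        "\<lambda>p k. if k < 2*L then (if even k then fst (p (k div 2)) else snd (p (k div 2))) else undefined"])
    fix p assume p: "p \<in> PiE {..<L} (\<lambda>_. {..<n}\<times>{..<n})"
    show "(\<lambda>i. if i < L then ((\<lambda>k. if k < 2*L then (if even k then fst (p (k div 2)) else snd (p (k div 2))) else undefined) (2*i),
            (\<lambda>k. if k < 2*L then (if even k then fst (p (k div 2)) else snd (p (k div 2))) else undefined) (2*i+1)) else undefined) = p"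
      using p by (auto simp: PiE_def extensional_def fun_eq_iff)
    show "(\<lambda>k. if k < 2*L then (if even k then fst (p (k div 2)) else snd (p (k div 2))) else undefined) \<in> PiE {..<2*L} (\<lambda>_. {..<n})"
      using p by (auto simp: PiE_def extensional_def Pi_def mem_Times_iff)
  next
    fix f assume f: "f \<in> PiE {..<2*L} (\<lambda>_. {..<n})"
    show "(\<lambda>k. if k < 2*L then (if even k then fst ((\<lambda>i. if i < L then (f (2*i), f (2*i+1)) else undefined) (k div 2))
            else snd ((\<lambda>i. if i < L then (f (2*i), f (2*i+1)) else undefined) (k div 2))) else undefined) = f"
    proof
      fix k show "(if k < 2*L then (if even k then fst ((\<lambda>i. if i < L then (f (2*i), f (2*i+1)) else undefined) (k div 2))
            else snd ((\<lambda>i. if i < L then (f (2*i), f (2*i+1)) else undefined) (k div 2))) else undefined) = f k"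
        using f by (cases "k < 2*L"; cases "even k") (auto simp: PiE_def extensional_def elim!: evenE oddE)
    qed
    show "(\<lambda>i. if i < L then (f (2*i), f (2*i+1)) else undefined) \<in> PiE {..<L} (\<lambda>_. {..<n}\<times>{..<n})"
      using f by (auto simp: PiE_def extensional_def Pi_def)
  next
    fix p assume p: "p \<in> PiE {..<L} (\<lambda>_. {..<n}\<times>{..<n})"
    show "(\<Prod>i<L. G i ((\<lambda>k. if k < 2*L then (if even k then fst (p (k div 2)) else snd (p (k div 2))) else undefined) (2*i))
           ((\<lambda>k. if k < 2*L then (if even k then fst (p (k div 2)) else snd (p (k div 2))) else undefined) (2*i+1))) = (\<Prod>i<L. G i (fst (p i)) (snd (p i)))"
      by (rule prod.cong) auto
  qed
  finally show ?thesis .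
qed

lemma prod_even_odd:
  fixes g :: "nat \<Rightarrow> real"
  shows "(\<Prod>k<2*L. g k) = (\<Prod>i<L. g (2*i) * g (2*i+1))"
proof (induction L)
  case 0 then show ?case by simp
next
  case (Suc L)
  have "2 * Suc L = Suc (Suc (2*L))" by simp
  then show ?case using Suc by (simp add: mult.assoc)
qed

definition pf_sum :: "nat \<Rightarrow> real mat \<Rightarrow> real" where
  "pf_sum L A = (\<Sum>\<sigma> \<in> {p. p permutes {0..<2*L}}. signof \<sigma> * (\<Prod>i<L. A $$ (\<sigma> (2*i), \<sigma> (2*i+1))))"

lemma pfaffian_pf_sum: "pfaffian L A = pf_sum L A / (2 ^ L * fact L)"
  unfolding pfaffian_def pf_sum_def by simp



lemma inj_perm:
  fixes f :: "nat \<Rightarrow> nat"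
  assumes inj: "inj_on f {0..<n}" and im: "f ` {0..<n} \<subseteq> {0..<n}"
  shows "(\<lambda>k. if k<n then f k else k) permutes {0..<n}"
proof -
  have "f ` {0..<n} = {0..<n}" by (rule endo_inj_surj[OF _ im inj]) simp
  then have "bij_betw f {0..<n} {0..<n}" using inj by (simp add: bij_betw_def)
  from permutes_restrict_id[OF this] show ?thesis unfolding restrict_id_def by simp
qed

lemma det_cols_sel:
  assumes B: "B \<in> carrier_mat n n" and f: "f \<in> PiE {..<n} (\<lambda>_. {..<n})"
  shows "(\<Sum>\<sigma>\<in>{p. p permutes {0..<n}}. signof \<sigma> * (\<Prod>k<n. B$$(\<sigma> k, f k)))
    = (if inj_on f {..<n} then signof (\<lambda>k. if k<n then f k else k) * det B else 0)"
proof -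
  define R where "R = mat n n (\<lambda>(i,j). (transpose_mat B)$$(f i, j))"
  have R: "R \<in> carrier_mat n n" unfolding R_def by simp
  have fn: "\<And>i. i < n \<Longrightarrow> f i < n" using f by auto
  have "det R = (\<Sum>\<sigma>\<in>{p. p permutes {0..<n}}. signof \<sigma> * (\<Prod>k<n. B$$(\<sigma> k, f k)))"
    unfolding det_def'[OF R]
  proof (rule sum.cong[OF refl])
    fix p assume p: "p \<in> {p. p permutes {0..<n}}"
    then have pn: "\<And>i. i < n \<Longrightarrow> p i < n" by (auto dest: permutes_in_image)
    show "signof p * (\<Prod>i = 0..<n. R $$ (i, p i)) = signof p * (\<Prod>k<n. B $$ (p k, f k))"
      unfolding atLeast0LessThan using pn fn B by (auto simp: R_def intro!: prod.cong)
  qed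
  moreover have "det R = (if inj_on f {..<n} then signof (\<lambda>k. if k<n then f k else k) * det B else 0)"
  proof (cases "inj_on f {..<n}")
    case True
    let ?t = "\<lambda>k. if k<n then f k else k"
    have t: "?t permutes {0..<n}"
      by (rule inj_perm) (use True fn in \<open>auto simp: atLeast0LessThan\<close>)
    have "R = mat n n (\<lambda>(i,j). (transpose_mat B)$$(?t i, j))"
      unfolding R_def by (rule eq_matI) auto
    then have "det R = signof ?t * det (transpose_mat B)"
      using det_permute_rows[OF _ t, of "transpose_mat B"] B by simp
    then show ?thesis using True det_transpose[OF B] by simp
  next
    case False
    then obtain i j where ij: "i < n" "j < n" "i \<noteq> j" "f i = f j"
      unfolding inj_on_def by auto
    have "row R i = row R j" using ij fn B by (auto simp: R_def intro!: eq_vecI)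
    then have "det R = 0" using det_identical_rows[OF R ij(3) ij(1) ij(2)] by simp
    then show ?thesis using False by simp
  qed
  ultimately show ?thesis by simp
qed

theorem pf_sum_congruence:
  assumes A: "A \<in> carrier_mat (2*L) (2*L)" and B: "B \<in> carrier_mat (2*L) (2*L)"
  shows "pf_sum L (B * A * transpose_mat B) = det B * pf_sum L A"
proof -
  define n where "n = 2*L"
  have A': "A \<in> carrier_mat n n" and B': "B \<in> carrier_mat n n" using A B n_def by auto
  define Fn where "Fn = PiE {..<n} (\<lambda>_. {..<n})"
  define X where "X = (\<lambda>f. \<Prod>i<L. A$$(f (2*i), f (2*i+1)))"
  let ?P = "{p. p permutes {0..<n}}"
  have "pf_sum L (B * A * transpose_mat B) = (\<Sum>\<sigma>\<in>?P. signof \<sigma> *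
     (\<Prod>i<L. \<Sum>a<n. \<Sum>b<n. B$$(\<sigma> (2*i),a) * A$$(a,b) * B$$(\<sigma> (2*i+1),b)))"
    unfolding pf_sum_def n_def[symmetric]
  proof (rule sum.cong[OF refl])
    fix p assume p: "p \<in> ?P"
    then have pn: "\<And>i. i < n \<Longrightarrow> p i < n" by (auto dest: permutes_in_image)
    show "signof p * (\<Prod>i<L. (B * A * transpose_mat B) $$ (p (2 * i), p (2 * i + 1))) =
         signof p * (\<Prod>i<L. \<Sum>a<n. \<Sum>b<n. B $$ (p (2 * i), a) * A $$ (a, b) * B $$ (p (2 * i + 1), b))"
      by (intro arg_cong[where f="\<lambda>x. signof p * x"] prod.cong refl cong_entry[OF A' B'])
         (auto simp: n_def intro!: pn[unfolded n_def])
  qed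
  also have "\<dots> = (\<Sum>\<sigma>\<in>?P. signof \<sigma> * (\<Sum>f\<in>Fn. X f * (\<Prod>k<n. B$$(\<sigma> k, f k))))"
  proof (rule sum.cong[OF refl])
    fix p assume p: "p \<in> ?P"
    have "(\<Prod>i<L. \<Sum>a<n. \<Sum>b<n. B$$(p (2*i),a) * A$$(a,b) * B$$(p (2*i+1),b))
       = (\<Sum>f\<in>Fn. \<Prod>i<L. B$$(p (2*i),f (2*i)) * A$$(f (2*i),f (2*i+1)) * B$$(p (2*i+1),f (2*i+1)))"
      unfolding Fn_def n_def by (rule prod_pair_expand)
    also have "\<dots> = (\<Sum>f\<in>Fn. X f * (\<Prod>k<n. B$$(p k, f k)))"
    proof (rule sum.cong[OF refl])
      fix f
      have "(\<Prod>k<n. B$$(p k, f k)) = (\<Prod>i<L. B$$(p (2*i), f (2*i)) * B$$(p (2*i+1), f (2*i+1)))"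
        unfolding n_def by (rule prod_even_odd)
      then show "(\<Prod>i<L. B$$(p (2*i),f (2*i)) * A$$(f (2*i),f (2*i+1)) * B$$(p (2*i+1),f (2*i+1)))
          = X f * (\<Prod>k<n. B$$(p k, f k))"
        unfolding X_def by (simp add: prod.distrib[symmetric] ac_simps)
    qed
    finally show "signof p * (\<Prod>i<L. \<Sum>a<n. \<Sum>b<n. B$$(p (2*i),a) * A$$(a,b) * B$$(p (2*i+1),b))
       = signof p * (\<Sum>f\<in>Fn. X f * (\<Prod>k<n. B$$(p k, f k)))" by simp
  qed
  also have "\<dots> = (\<Sum>f\<in>Fn. X f * (\<Sum>\<sigma>\<in>?P. signof \<sigma> * (\<Prod>k<n. B$$(\<sigma> k, f k))))"
    by (simp add: sum_distrib_left sum.swap[of _ ?P] ac_simps)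
  also have "\<dots> = (\<Sum>f\<in>Fn. if inj_on f {..<n} then X f * signof (\<lambda>k. if k<n then f k else k) * det B else 0)"
    by (rule sum.cong[OF refl]) (simp add: det_cols_sel[OF B'] Fn_def)
  also have "\<dots> = (\<Sum>f\<in>{f\<in>Fn. inj_on f {..<n}}. X f * signof (\<lambda>k. if k<n then f k else k) * det B)"
    by (rule sum.inter_filter[symmetric]) (simp add: Fn_def finite_PiE)
  also have "\<dots> = (\<Sum>\<tau>\<in>?P. X \<tau> * signof \<tau> * det B)"
  proof (rule sum.reindex_bij_witness[of _ "\<lambda>\<tau> k. if k<n then \<tau> k else undefined"
        "\<lambda>f k. if k<n then f k else k"])
    fix f assume f: "f \<in> {f\<in>Fn. inj_on f {..<n}}"
    show "(\<lambda>k. if k<n then (\<lambda>k. if k<n then f k else k) k else undefined) = f"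
      using f by (auto simp: fun_eq_iff Fn_def PiE_def extensional_def)
    have "(\<lambda>k. if k<n then f k else k) permutes {0..<n}"
      by (rule inj_perm) (use f in \<open>auto simp: Fn_def atLeast0LessThan\<close>)
    then show "(\<lambda>k. if k<n then f k else k) \<in> ?P" by simp
  next
    fix \<tau> assume t: "\<tau> \<in> ?P"
    then have tn: "\<And>i. i < n \<Longrightarrow> \<tau> i < n" by (auto dest: permutes_in_image)
    show "(\<lambda>k. if k<n then (\<lambda>k. if k<n then \<tau> k else undefined) k else k) = \<tau>"
      using t by (auto simp: fun_eq_iff permutes_def)
    show "(\<lambda>k. if k<n then \<tau> k else undefined) \<in> {f\<in>Fn. inj_on f {..<n}}"
    proof -
      have "inj_on \<tau> {..<n}" using t by (auto intro: inj_on_subset[OF permutes_inj])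
      then have "inj_on (\<lambda>k. if k<n then \<tau> k else undefined) {..<n}"
        by (rule inj_on_cong[THEN iffD1, rotated]) simp
      moreover have "(\<lambda>k. if k<n then \<tau> k else undefined) \<in> Fn"
        unfolding Fn_def using tn by (auto simp: PiE_def extensional_def)
      ultimately show ?thesis by simp
    qed
  next
    fix f assume f: "f \<in> {f\<in>Fn. inj_on f {..<n}}"
    have "X (\<lambda>k. if k<n then f k else k) = X f"
      unfolding X_def by (rule prod.cong) (auto simp: n_def)
    then show "X (\<lambda>k. if k<n then f k else k) * signof (\<lambda>k. if k<n then f k else k) * det B
       = X f * signof (\<lambda>k. if k<n then f k else k) * det B" by simp
  qed
  also have "\<dots> = det B * pf_sum L A"
    unfolding pf_sum_def X_def n_def by (simp add: sum_distrib_left ac_simps)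
  finally show ?thesis .
qed



definition Jmat :: "nat \<Rightarrow> real mat" where
  "Jmat n = mat n n (\<lambda>(i,j). if even i \<and> j = i+1 then 1 else if odd i \<and> i = j+1 then -1 else 0)"

definition bp :: "nat \<Rightarrow> (nat \<Rightarrow> nat) \<Rightarrow> nat \<Rightarrow> nat" where
  "bp L \<pi> = (\<lambda>k. if k < 2*L then 2 * \<pi> (k div 2) + k mod 2 else k)"

definition tS :: "nat \<Rightarrow> nat set \<Rightarrow> nat \<Rightarrow> nat" where
  "tS L S = (\<lambda>k. if k < 2*L \<and> k div 2 \<in> S then (if even k then k+1 else k-1) else k)"

lemma bp_id: "bp L id = id"
  by (auto simp: bp_def fun_eq_iff)

lemma tt:
  assumes "r < (2::nat)"
  shows "Transposition.transpose (2*a) (2*b) (Transposition.transpose (2*a+1) (2*b+1) (2*m + r)) = 2 * Transposition.transpose a b m + r"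
  using assms unfolding less_2_cases_iff
  by (elim disjE) (auto simp: Transposition.transpose_def)

lemma bp_swap:
  assumes "a < L" "b < L" "p permutes {0..<L}"
  shows "bp L (Transposition.transpose a b \<circ> p) =
    Transposition.transpose (2*a) (2*b) \<circ> Transposition.transpose (2*a+1) (2*b+1) \<circ> bp L p"
proof
  fix k
  show "bp L (Transposition.transpose a b \<circ> p) k =
    (Transposition.transpose (2*a) (2*b) \<circ> Transposition.transpose (2*a+1) (2*b+1) \<circ> bp L p) k"
  proof (cases "k < 2*L")
    case True
    define i where "i = k div 2"
    define r where "r = k mod 2"
    have k: "k = 2*i + r" and r: "r < 2" unfolding i_def r_def by auto
    have "bp L (Transposition.transpose a b \<circ> p) k = 2 * Transposition.transpose a b (p i) + r"
      using True unfolding bp_def i_def r_def by simp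
    moreover have "bp L p k = 2 * p i + r"
      using True unfolding bp_def i_def r_def by simp
    ultimately show ?thesis using tt[OF r] by simp
  next
    case False
    then show ?thesis using assms by (auto simp: bp_def Transposition.transpose_def)
  qed
qed

lemma bp_sign:
  assumes "\<pi> permutes {0..<L}"
  shows "bp L \<pi> permutes {0..<2*L} \<and> sign (bp L \<pi>) = 1"
  using assms finite_atLeastLessThan
proof (induction rule: permutes_induct)
  case id
  have "bp L (\<lambda>a. a) = (\<lambda>a. a)" by (auto simp: bp_def fun_eq_iff)
  then show ?case using permutes_id[unfolded id_def] by (simp add: id_def)
next
  case (swap a b p)
  have ab: "a < L" "b < L" using swap by auto
  have pp: "p permutes {0..<L}" and IH: "bp L p permutes {0..<2*L}" "sign (bp L p) = 1"
    and abn: "a \<noteq> b" using swap by auto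
  have t1: "Transposition.transpose (2*a) (2*b) permutes {0..<2*L}"
    by (rule permutes_swap_id) (use ab in auto)
  have t2: "Transposition.transpose (2*a+1) (2*b+1) permutes {0..<2*L}"
    by (rule permutes_swap_id) (use ab in auto)
  have perm: "bp L (Transposition.transpose a b \<circ> p) permutes {0..<2*L}"
    unfolding bp_swap[OF ab pp]
    by (intro permutes_compose t1 t2 IH(1))
  have "sign (bp L (Transposition.transpose a b \<circ> p)) =
      sign (Transposition.transpose (2*a) (2*b)) * sign (Transposition.transpose (2*a+1) (2*b+1)) * sign (bp L p)"
    unfolding bp_swap[OF ab pp]
    by (simp add: sign_compose permutation_swap_id permutation_compose
          permutes_imp_permutation[OF _ IH(1)])
  also have "\<dots> = 1" using abn IH(2) by (simp add: sign_swap_id)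
  finally show ?case using perm by (simp only: o_def[symmetric])
qed

lemma tt2:
  assumes "r < (2::nat)"
  shows "Transposition.transpose (2*i) (2*i+1) (2*j+r) = (if j = i then 2*j + (1-r) else 2*j+r)"
  using assms unfolding less_2_cases_iff
  by (elim disjE) (auto simp: Transposition.transpose_def)

lemma ts_val:
  assumes "r < (2::nat)" "2*j+r < 2*L"
  shows "tS L S (2*j+r) = (if j \<in> S then 2*j + (1-r) else 2*j+r)"
  using assms unfolding less_2_cases_iff
  by (elim disjE) (auto simp: tS_def)

lemma tS_insert:
  assumes "i \<notin> S" "i < L"
  shows "tS L (insert i S) = Transposition.transpose (2*i) (2*i+1) \<circ> tS L S"
proof
  fix k
  show "tS L (insert i S) k = (Transposition.transpose (2*i) (2*i+1) \<circ> tS L S) k"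
  proof (cases "k < 2*L")
    case True
    define j where "j = k div 2"
    define r where "r = k mod 2"
    have k: "k = 2*j + r" and r: "r < 2" unfolding j_def r_def by auto
    have r2: "1 - r < 2" by simp
    show ?thesis unfolding k o_def ts_val[OF r True[unfolded k]]
      using tt2[OF r, of i j] tt2[OF r2, of i j] assms by auto
  next
    case False
    then show ?thesis using assms by (auto simp: tS_def Transposition.transpose_def)
  qed
qed

lemma tS_sign:
  assumes "finite S" "S \<subseteq> {0..<L}"
  shows "tS L S permutes {0..<2*L} \<and> sign (tS L S) = (-1) ^ card S"
  using assms
proof (induction rule: finite_induct)
  case empty
  have "tS L {} = id" by (auto simp: tS_def fun_eq_iff)
  then show ?case using permutes_id[unfolded id_def] by simp
next
  case (insert i S)
  have iL: "i < L" using insert by auto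
  have t: "Transposition.transpose (2*i) (2*i+1) permutes {0..<2*L}"
    by (rule permutes_swap_id) (use iL in auto)
  have IH: "tS L S permutes {0..<2*L}" "sign (tS L S) = (-1) ^ card S" using insert by auto
  have "tS L (insert i S) permutes {0..<2*L}"
    unfolding tS_insert[OF insert(2) iL] by (intro permutes_compose t IH(1))
  moreover have "sign (tS L (insert i S)) = (-1) ^ card (insert i S)"
    unfolding tS_insert[OF insert(2) iL]
    using IH insert(1,2)
    by (simp add: sign_compose permutation_swap_id permutes_imp_permutation[OF _ IH(1)] sign_swap_id)
  ultimately show ?case by simp
qed



lemma same_div:
  fixes x y x' :: nat
  assumes "x div 2 = y div 2" "x \<noteq> y" "x' div 2 = x div 2" "x' \<noteq> x"
  shows "y = x'"
proof -
  have "x = 2*(x div 2) + x mod 2" "y = 2*(y div 2) + y mod 2" "x' = 2*(x' div 2) + x' mod 2" by simp_all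
  moreover have "x mod 2 < 2" "y mod 2 < 2" "x' mod 2 < 2" by simp_all
  ultimately show ?thesis using assms unfolding less_2_cases_iff by linarith
qed
lemma pair_facts:
  fixes x x' :: nat
  assumes "(even x \<and> x' = x+1) \<or> (odd x \<and> x = x'+1)"
  shows "x' div 2 = x div 2" "x' \<noteq> x"
    "odd x \<Longrightarrow> x = 2*(x div 2)+1 \<and> x' = 2*(x div 2)"
    "even x \<Longrightarrow> x = 2*(x div 2) \<and> x' = 2*(x div 2)+1"
  using assms by (auto elim!: evenE oddE)

lemma bp_val:
  assumes "r < (2::nat)" "2*i+r < 2*L"
  shows "bp L \<pi> (2*i+r) = 2 * \<pi> i + r"
  using assms unfolding less_2_cases_iff
  by (elim disjE) (auto simp: bp_def)

lemma J_entry: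
  assumes "i < n" "j < n"
  shows "Jmat n $$ (i,j) = (if even i \<and> j = i+1 then 1 else if odd i \<and> i = j+1 then -1 else 0)"
  using assms unfolding Jmat_def by simp

lemma term_one:
  assumes sig: "\<sigma> permutes {0..<2*L}"
    and nz: "\<And>i. i < L \<Longrightarrow> Jmat (2*L) $$ (\<sigma> (2*i), \<sigma> (2*i+1)) \<noteq> 0"
  shows "signof \<sigma> * (\<Prod>i<L. Jmat (2*L) $$ (\<sigma> (2*i), \<sigma> (2*i+1))) = (1::real)"
proof -
  have sn: "\<And>k. k < 2*L \<Longrightarrow> \<sigma> k < 2*L" using sig by (auto dest: permutes_in_image)
  have sinj: "inj \<sigma>" using sig by (rule permutes_inj)
  have pair: "\<And>i. i < L \<Longrightarrow> (even (\<sigma> (2*i)) \<and> \<sigma> (2*i+1) = \<sigma> (2*i) + 1) \<or>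
                              (odd (\<sigma> (2*i)) \<and> \<sigma> (2*i) = \<sigma> (2*i+1) + 1)"
  proof -
    fix i assume i: "i < L"
    have "2*i < 2*L" "2*i+1 < 2*L" using i by auto
    then show "?thesis i" using nz[OF i] J_entry[OF sn sn, of "2*i" "2*i+1"]
      by (auto split: if_splits)
  qed
  define S where "S = {i \<in> {0..<L}. odd (\<sigma> (2*i))}"
  define \<pi> where "\<pi> = (\<lambda>i. if i < L then \<sigma> (2*i) div 2 else i)"
  have S: "finite S" "S \<subseteq> {0..<L}" unfolding S_def by auto
  have pi_perm: "\<pi> permutes {0..<L}"
    unfolding \<pi>_def
  proof (rule inj_perm)
    show "(\<lambda>i. \<sigma> (2*i) div 2) ` {0..<L} \<subseteq> {0..<L}"
    proof (rule image_subsetI)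
      fix i assume "i \<in> {0..<L}"
      then have "\<sigma> (2*i) < 2*L" using sn by auto
      then show "\<sigma> (2*i) div 2 \<in> {0..<L}" by auto
    qed
    show "inj_on (\<lambda>i. \<sigma> (2*i) div 2) {0..<L}"
    proof (rule inj_onI)
      fix i j assume i: "i \<in> {0..<L}" and j: "j \<in> {0..<L}" and eq: "\<sigma> (2*i) div 2 = \<sigma> (2*j) div 2"
      show "i = j"
      proof (rule ccontr)
        assume ij: "i \<noteq> j"
        have ne: "\<sigma> (2*i) \<noteq> \<sigma> (2*j)" using ij injD[OF sinj] by force
        have p: "\<sigma> (2*i+1) div 2 = \<sigma> (2*i) div 2 \<and> \<sigma> (2*i+1) \<noteq> \<sigma> (2*i)"
          using pair_facts(1,2)[OF pair[of i]] i by auto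
        have "\<sigma> (2*j) = \<sigma> (2*i+1)" using p eq ne same_div by blast
        then have "2*j = 2*i+1" using injD[OF sinj] by blast
        then have "even (2*i+1)" by (metis even_mult_iff even_numeral)
        then show False by simp
      qed
    qed
  qed
  have decomp: "\<sigma> = bp L \<pi> \<circ> tS L S"
  proof
    fix k
    show "\<sigma> k = (bp L \<pi> \<circ> tS L S) k"
    proof (cases "k < 2*L")
      case False
      then have "\<sigma> k = k" using sig by (auto simp: permutes_def)
      then show ?thesis using False by (simp add: bp_def tS_def)
    next
      case True
      define i where "i = k div 2"
      define r where "r = k mod 2"
      have k: "k = 2*i + r" and r: "r < 2" unfolding i_def r_def by auto
      have iL: "i < L" using True k by auto
      have r2: "1 - r < 2" by simp
      have k2: "2*i + (1-r) < 2*L" using iL by auto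
      have pi: "\<pi> i = \<sigma> (2*i) div 2" using iL unfolding \<pi>_def by simp
      show ?thesis
      proof (cases "i \<in> S")
        case True
        then have "odd (\<sigma> (2*i))" unfolding S_def by auto
        then have "\<sigma> (2*i) = 2 * \<pi> i + 1" "\<sigma> (2*i+1) = 2 * \<pi> i"
          using pair_facts(3)[OF pair[OF iL]] pi by auto
        then show ?thesis unfolding k o_def
          using ts_val[OF r \<open>k < 2*L\<close>[unfolded k], of S] bp_val[OF r2 k2, of \<pi>] True r
          unfolding less_2_cases_iff by auto
      next
        case False
        then have "even (\<sigma> (2*i))" unfolding S_def using iL by auto
        then have "\<sigma> (2*i) = 2 * \<pi> i" "\<sigma> (2*i+1) = 2 * \<pi> i + 1"
          using pair_facts(4)[OF pair[OF iL]] pi by auto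
        then show ?thesis unfolding k o_def
          using ts_val[OF r \<open>k < 2*L\<close>[unfolded k], of S] bp_val[OF r \<open>k < 2*L\<close>[unfolded k], of \<pi>] False r
          unfolding less_2_cases_iff by auto
      qed
    qed
  qed
  have sgn: "sign \<sigma> = (-1) ^ card S"
  proof -
    have p1: "permutation (bp L \<pi>)" using bp_sign[OF pi_perm]
      by (meson finite_atLeastLessThan permutes_imp_permutation)
    have p2: "permutation (tS L S)" using tS_sign[OF S]
      by (meson finite_atLeastLessThan permutes_imp_permutation)
    have "sign \<sigma> = sign (bp L \<pi>) * sign (tS L S)"
      unfolding decomp by (rule sign_compose[OF p1 p2])
    then show ?thesis using bp_sign[OF pi_perm] tS_sign[OF S] by simp
  qed
  have prd: "(\<Prod>i<L. Jmat (2*L) $$ (\<sigma> (2*i), \<sigma> (2*i+1))) = (\<Prod>i<L. if i \<in> S then -1 else 1)"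
  proof (rule prod.cong[OF refl])
    fix i assume "i \<in> {..<L}"
    then have i: "i < L" by simp
    have "2*i < 2*L" "2*i+1 < 2*L" using i by auto
    then show "Jmat (2*L) $$ (\<sigma> (2*i), \<sigma> (2*i+1)) = (if i \<in> S then -1 else 1)"
    proof (cases "i \<in> S")
      case True
      then have o: "odd (\<sigma> (2*i))" unfolding S_def by auto
      then have "\<sigma> (2*i) = \<sigma> (2*i+1) + 1" using pair[OF i] by blast
      then show ?thesis using J_entry[OF sn sn, of "2*i" "2*i+1"] o True \<open>2*i < 2*L\<close> \<open>2*i+1 < 2*L\<close>
        by simp
    next
      case False
      then have o: "even (\<sigma> (2*i))" unfolding S_def using i by auto
      then have "\<sigma> (2*i+1) = \<sigma> (2*i) + 1" using pair[OF i] by blast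
      then show ?thesis using J_entry[OF sn sn, of "2*i" "2*i+1"] o False \<open>2*i < 2*L\<close> \<open>2*i+1 < 2*L\<close>
        by simp
    qed
  qed
  have "(\<Prod>i<L. if i \<in> S then -1 else (1::real)) = (-1) ^ card S"
  proof -
    have "(\<Prod>i<L. if i \<in> S then -1 else (1::real)) = (\<Prod>i\<in>S. -1)"
      using S by (intro prod.mono_neutral_cong_right) (auto simp: atLeast0LessThan)
    then show ?thesis by simp
  qed
  then show ?thesis unfolding prd sgn by (simp flip: power_mult_distrib)
qed

lemma pf_sum_J_pos: "pf_sum L (Jmat (2*L)) > 0"
proof -
  let ?P = "{p. p permutes {0..<2*L}}"
  let ?t = "\<lambda>\<sigma>. signof \<sigma> * (\<Prod>i<L. Jmat (2*L) $$ (\<sigma> (2*i), \<sigma> (2*i+1)))"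
  have nonneg: "\<And>\<sigma>. \<sigma> \<in> ?P \<Longrightarrow> 0 \<le> (?t \<sigma> :: real)"
  proof -
    fix \<sigma> assume s: "\<sigma> \<in> ?P"
    show "0 \<le> (?t \<sigma> :: real)"
    proof (cases "\<forall>i<L. Jmat (2*L) $$ (\<sigma> (2*i), \<sigma> (2*i+1)) \<noteq> 0")
      case True
      then show ?thesis using term_one[of \<sigma> L] s by simp
    next
      case False
      then have "(\<Prod>i<L. Jmat (2*L) $$ (\<sigma> (2*i), \<sigma> (2*i+1))) = 0"
        by (auto simp: prod_zero_iff)
      then show ?thesis by (metis mult_zero_right order_refl)
    qed
  qed
  have idt: "?t id = 1"
  proof -
    have "(\<Prod>i<L. Jmat (2*L) $$ (2*i, 2*i+1)) = (\<Prod>i<L. (1::real))"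
      by (rule prod.cong[OF refl]) (auto simp: Jmat_def)
    then show ?thesis by simp
  qed
  have idP: "id \<in> ?P" by simp
  have finP: "finite ?P" by (rule finite_permutations) simp
  have "?t id \<le> sum ?t ?P"
    by (rule member_le_sum[OF idP _ finP]) (use nonneg in auto)
  then show ?thesis unfolding pf_sum_def using idt by simp
qed



definition sk :: "nat \<Rightarrow> real mat \<Rightarrow> bool" where
  "sk n A \<longleftrightarrow> A \<in> carrier_mat n n \<and> (\<forall>i<n. \<forall>j<n. A$$(j,i) = - A$$(i,j))"

lemma skew_sk: "skew_symmetric_mat n A \<Longrightarrow> sk n A"
  unfolding skew_symmetric_mat_def sk_def
proof (intro conjI allI impI, blast)
  fix i j assume A: "A \<in> carrier_mat n n \<and> transpose_mat A = - A" and i: "i < n" and j: "j < n"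
  have Ac: "A \<in> carrier_mat n n" and T: "transpose_mat A = - A" using A by auto
  have "A $$ (j,i) = transpose_mat A $$ (i,j)" using Ac i j by auto
  also have "\<dots> = (- A) $$ (i,j)" using T by simp
  also have "\<dots> = - A $$ (i,j)" using Ac i j by auto
  finally show "A $$ (j, i) = - A $$ (i, j)" .
qed

lemma skD: "sk n A \<Longrightarrow> i < n \<Longrightarrow> j < n \<Longrightarrow> A$$(j,i) = - A$$(i,j)"
  unfolding sk_def by blast

lemma skC: "sk n A \<Longrightarrow> A \<in> carrier_mat n n"
  unfolding sk_def by blast

lemma sk_diag: "sk n A \<Longrightarrow> i < n \<Longrightarrow> A$$(i,i) = 0"
  using skD[of n A i i] by linarith

lemma cong_carrier: "A \<in> carrier_mat n n \<Longrightarrow> N \<in> carrier_mat n n \<Longrightarrow> N * A * transpose_mat N \<in> carrier_mat n n"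
  by simp

lemma cong_det: "A \<in> carrier_mat n n \<Longrightarrow> N \<in> carrier_mat n n \<Longrightarrow> det (N * A * transpose_mat N) = det N * det A * det N"
  by (simp add: det_mult det_transpose)

lemma cong_sk:
  assumes A: "sk n A" and N: "N \<in> carrier_mat n n"
  shows "sk n (N * A * transpose_mat N)"
proof -
  have Ac: "A \<in> carrier_mat n n" using skC[OF A] .
  have "\<forall>i<n. \<forall>j<n. (N * A * transpose_mat N) $$ (j,i) = - (N * A * transpose_mat N) $$ (i,j)"
  proof (intro allI impI)
    fix i j assume i: "i < n" and j: "j < n"
    have "(N * A * transpose_mat N) $$ (j,i) = (\<Sum>a<n. \<Sum>b<n. N$$(j,a) * A$$(a,b) * N$$(i,b))"
      by (rule cong_entry[OF Ac N j i])
    also have "\<dots> = (\<Sum>a<n. \<Sum>b<n. - (N$$(i,b) * A$$(b,a) * N$$(j,a)))"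
    proof (intro sum.cong refl)
      fix a b assume a: "a \<in> {..<n}" and b: "b \<in> {..<n}"
      have e: "A$$(a,b) = - A$$(b,a)" using skD[OF A, of b a] a b by simp
      show "N$$(j,a) * A$$(a,b) * N$$(i,b) = - (N$$(i,b) * A$$(b,a) * N$$(j,a))"
        unfolding e by simp
    qed
    also have "\<dots> = (\<Sum>b<n. \<Sum>a<n. - (N$$(i,b) * A$$(b,a) * N$$(j,a)))"
      by (rule sum.swap)
    also have "\<dots> = - (N * A * transpose_mat N) $$ (i,j)"
      unfolding cong_entry[OF Ac N i j] by (simp add: sum_negf)
    finally show "(N * A * transpose_mat N) $$ (j,i) = - (N * A * transpose_mat N) $$ (i,j)" .
  qed
  then show ?thesis unfolding sk_def using cong_carrier[OF Ac N] by blast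
qed

lemma cong_comp:
  fixes A N1 N2 :: "real mat"
  assumes A: "A \<in> carrier_mat n n" and N1: "N1 \<in> carrier_mat n n" and N2: "N2 \<in> carrier_mat n n"
  shows "N2 * (N1 * A * transpose_mat N1) * transpose_mat N2 = (N2 * N1) * A * transpose_mat (N2 * N1)"
proof -
  have T1: "transpose_mat N1 \<in> carrier_mat n n" and T2: "transpose_mat N2 \<in> carrier_mat n n"
    using N1 N2 by auto
  have "(N2 * N1) * A * transpose_mat (N2 * N1) = (N2 * N1) * A * (transpose_mat N1 * transpose_mat N2)"
    using transpose_mult[OF N2 N1] by simp
  also have "\<dots> = N2 * (N1 * A * transpose_mat N1) * transpose_mat N2"
    using A N1 N2 T1 T2 by (simp add: assoc_mult_mat[of _ n n _ n _ n])
  finally show ?thesis by simp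
qed

lemma double_delta:
  fixes n x y :: nat
  assumes x: "x < n" and y: "y < n"
  shows "(\<Sum>a<n. \<Sum>b<n. (if a = x then (u::real) else 0) * F a b * (if b = y then v else 0)) = u * F x y * v"
proof -
  have "\<And>a. (\<Sum>b<n. (if a = x then u else 0) * F a b * (if b = y then v else 0))
      = (\<Sum>b<n. if b = y then (if a = x then u else 0) * F a b * v else 0)"
    by (rule sum.cong) auto
  also have "\<And>a. (\<Sum>b<n. if b = y then (if a = x then u else 0) * F a b * v else 0) = (if a = x then u else 0) * F a y * v"
    using y by (subst sum.delta) auto
  finally have inner: "\<And>a. (\<Sum>b<n. (if a = x then u else 0) * F a b * (if b = y then v else 0)) = (if a = x then u else 0) * F a y * v" .
  have "(\<Sum>a<n. (if a = x then u else 0) * F a y * v) = (\<Sum>a<n. if a = x then u * F a y * v else 0)"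
    by (rule sum.cong) auto
  also have "\<dots> = u * F x y * v" using x by (subst sum.delta) auto
  finally show ?thesis unfolding inner .
qed

definition perm_m :: "nat \<Rightarrow> (nat \<Rightarrow> nat) \<Rightarrow> real mat" where
  "perm_m n \<tau> = mat n n (\<lambda>(i,j). if j = \<tau> i then 1 else 0)"

lemma perm_m_entry:
  assumes A: "A \<in> carrier_mat n n" and t: "\<tau> permutes {0..<n}" and i: "i < n" and j: "j < n"
  shows "(perm_m n \<tau> * A * transpose_mat (perm_m n \<tau>)) $$ (i,j) = A $$ (\<tau> i, \<tau> j)"
proof -
  have tn: "\<And>x. x < n \<Longrightarrow> \<tau> x < n" using t by (auto dest: permutes_in_image)
  have P: "perm_m n \<tau> \<in> carrier_mat n n" unfolding perm_m_def by simp
  have "(perm_m n \<tau> * A * transpose_mat (perm_m n \<tau>)) $$ (i,j) =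
     (\<Sum>a<n. \<Sum>b<n. (if a = \<tau> i then 1 else 0) * A$$(a,b) * (if b = \<tau> j then 1 else 0))"
    unfolding cong_entry[OF A P i j] using i j by (simp add: perm_m_def)
  also have "\<dots> = 1 * A $$ (\<tau> i, \<tau> j) * 1"
    by (rule double_delta[OF tn[OF i] tn[OF j]])
  finally show ?thesis by simp
qed

lemma perm_m_det:
  assumes t: "\<tau> permutes {0..<n}"
  shows "perm_m n \<tau> \<in> carrier_mat n n" "det (perm_m n \<tau>) \<noteq> 0"
proof -
  show "perm_m n \<tau> \<in> carrier_mat n n" unfolding perm_m_def by simp
  have tn: "\<And>x. x < n \<Longrightarrow> \<tau> x < n" using t by (auto dest: permutes_in_image)
  have "perm_m n \<tau> = mat n n (\<lambda>(i,j). (1\<^sub>m n :: real mat) $$ (\<tau> i, j))"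
    unfolding perm_m_def by (rule eq_matI) (auto simp: tn)
  then have "det (perm_m n \<tau>) = signof \<tau> * det (1\<^sub>m n :: real mat)"
    using det_permute_rows[OF one_carrier_mat t] by simp
  then show "det (perm_m n \<tau>) \<noteq> 0" by (simp add: sign_def)
qed

definition diag_m :: "nat \<Rightarrow> (nat \<Rightarrow> real) \<Rightarrow> real mat" where
  "diag_m n d = mat n n (\<lambda>(i,j). if i = j then d i else 0)"

lemma diag_m_entry:
  assumes A: "A \<in> carrier_mat n n" and i: "i < n" and j: "j < n"
  shows "(diag_m n d * A * transpose_mat (diag_m n d)) $$ (i,j) = d i * A $$ (i, j) * d j"
proof -
  have P: "diag_m n d \<in> carrier_mat n n" unfolding diag_m_def by simp
  have "(diag_m n d * A * transpose_mat (diag_m n d)) $$ (i,j) =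
     (\<Sum>a<n. \<Sum>b<n. (if i = a then d i else 0) * A$$(a,b) * (if j = b then d j else 0))"
    unfolding cong_entry[OF A P i j] using i j by (simp add: diag_m_def)
  also have "\<dots> = (\<Sum>a<n. \<Sum>b<n. (if a = i then d i else 0) * A$$(a,b) * (if b = j then d j else 0))"
    by (intro sum.cong refl) auto
  also have "\<dots> = d i * A $$ (i, j) * d j"
    by (rule double_delta[OF i j])
  finally show ?thesis .
qed

lemma diag_m_det:
  assumes d: "\<And>i. i < n \<Longrightarrow> d i \<noteq> 0"
  shows "diag_m n d \<in> carrier_mat n n" "det (diag_m n d) \<noteq> 0"
proof -
  show D: "diag_m n d \<in> carrier_mat n n" unfolding diag_m_def by simp
  have "det (diag_m n d) = prod_list (diag_mat (diag_m n d))"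
    by (rule det_upper_triangular) (auto simp: diag_m_def)
  moreover have "0 \<notin> set (diag_mat (diag_m n d))"
    using d by (auto simp: diag_mat_def diag_m_def)
  ultimately show "det (diag_m n d) \<noteq> 0" by (simp add: prod_list_zero_iff)
qed



definition elim_m :: "nat \<Rightarrow> nat \<Rightarrow> real mat \<Rightarrow> real mat" where
  "elim_m n p A = mat n n (\<lambda>(i,j). (if i = j then 1 else 0) +
     (if p+2 \<le> i then (if j = p then - A$$(i,p+1) else if j = p+1 then A$$(i,p) else 0) else 0))"

lemma elim_entry:
  assumes A: "A \<in> carrier_mat n n" and pn: "p+2 \<le> n" and i: "i < p+2" and j: "j < n"
  shows "(elim_m n p A * A * transpose_mat (elim_m n p A)) $$ (i,j) =
    A$$(i,j) + (if p+2 \<le> j then - A$$(j,p+1) * A$$(i,p) + A$$(j,p) * A$$(i,p+1) else 0)"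
proof -
  let ?E = "elim_m n p A"
  have E: "?E \<in> carrier_mat n n" unfolding elim_m_def by simp
  have i': "i < n" using i pn by simp
  define c1 where "c1 = (if p+2 \<le> j then - A$$(j,p+1) else 0)"
  define c2 where "c2 = (if p+2 \<le> j then A$$(j,p) else 0)"
  have Ej: "\<And>b. b < n \<Longrightarrow> ?E $$ (j,b) = (if b = j then 1 else 0) + (if b = p then c1 else 0) + (if b = p+1 then c2 else 0)"
    using j unfolding elim_m_def c1_def c2_def by auto
  have Ei: "\<And>a. a < n \<Longrightarrow> ?E $$ (i,a) = (if a = i then 1 else 0)"
    using i i' unfolding elim_m_def by auto
  have "(?E * A * transpose_mat ?E) $$ (i,j) = (\<Sum>a<n. \<Sum>b<n. ?E$$(i,a) * A$$(a,b) * ?E$$(j,b))"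
    by (rule cong_entry[OF A E i' j])
  also have "\<dots> = (\<Sum>a<n. if a = i then (\<Sum>b<n. A$$(a,b) * ?E$$(j,b)) else 0)"
    by (rule sum.cong[OF refl]) (auto simp: Ei)
  also have "\<dots> = (\<Sum>b<n. A$$(i,b) * ?E$$(j,b))"
    using i' by (subst sum.delta) auto
  also have "\<dots> = (\<Sum>b<n. (if b = j then A$$(i,b) else 0) + (if b = p then A$$(i,b) * c1 else 0) + (if b = p+1 then A$$(i,b) * c2 else 0))"
    by (rule sum.cong[OF refl]) (auto simp: Ej algebra_simps)
  also have "\<dots> = A$$(i,j) + A$$(i,p) * c1 + A$$(i,p+1) * c2"
    using j pn by (simp add: sum.distrib)
  finally show ?thesis unfolding c1_def c2_def by (auto simp: algebra_simps)
qed

lemma elim_det: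
  assumes pn: "p+2 \<le> n"
  shows "elim_m n p A \<in> carrier_mat n n" "det (elim_m n p A) \<noteq> 0"
proof -
  show E: "elim_m n p A \<in> carrier_mat n n" unfolding elim_m_def by simp
  have "det (elim_m n p A) = prod_list (diag_mat (elim_m n p A))"
    by (rule det_lower_triangular[OF _ E]) (auto simp: elim_m_def)
  moreover have "diag_mat (elim_m n p A) = map (\<lambda>i. 1) [0..<n]"
    by (auto simp: diag_mat_def elim_m_def)
  moreover have "prod_list (map (\<lambda>i. 1::real) [0..<n]) = 1" by (simp add: map_replicate_const)
  ultimately have "det (elim_m n p A) = 1" by simp
  then show "det (elim_m n p A) \<noteq> 0" by simp
qed



definition std :: "nat \<Rightarrow> nat \<Rightarrow> real mat \<Rightarrow> bool" where
  "std n k A \<longleftrightarrow> (\<forall>i<n. \<forall>j<n. (i < 2*k \<or> j < 2*k) \<longrightarrow> A$$(i,j) = Jmat n $$ (i,j))"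

lemma stdD: "std n k A \<Longrightarrow> i < n \<Longrightarrow> j < n \<Longrightarrow> i < 2*k \<or> j < 2*k \<Longrightarrow> A$$(i,j) = Jmat n $$ (i,j)"
  unfolding std_def by blast

lemma J_cross:
  assumes "i < 2*k" "2*k \<le> j" "i < n" "j < n"
  shows "Jmat n $$ (i,j) = 0" "Jmat n $$ (j,i) = 0"
proof -
  have a: "\<not> (even i \<and> j = i+1)"
  proof
    assume "even i \<and> j = i+1"
    then obtain m where "i = 2*m" "j = 2*m+1" by (auto elim: evenE)
    then show False using assms by presburger
  qed
  have b: "\<not> (odd j \<and> j = i+1)"
  proof
    assume "odd j \<and> j = i+1"
    then obtain m where "j = 2*m+1" "i = 2*m" by (auto elim: oddE)
    then show False using assms by presburger
  qed
  show "Jmat n $$ (i,j) = 0" using a assms J_entry[of i n j] by auto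
  show "Jmat n $$ (j,i) = 0" using b assms J_entry[of j n i] by auto
qed

lemma J_sk: "sk n (Jmat n)"
  unfolding sk_def
proof (intro conjI allI impI)
  show "Jmat n \<in> carrier_mat n n" unfolding Jmat_def by simp
  fix i j assume i: "i < n" and j: "j < n"
  show "Jmat n $$ (j,i) = - Jmat n $$ (i,j)"
    unfolding J_entry[OF i j] J_entry[OF j i]
    by auto
qed

lemma J_small:
  assumes "even p" "p+2 \<le> n"
  shows "Jmat n $$ (p,p) = 0" "Jmat n $$ (p,p+1) = 1" "Jmat n $$ (p+1,p) = -1" "Jmat n $$ (p+1,p+1) = 0"
  using assms by (auto simp: J_entry)

lemma zero_row_det:
  assumes A: "(A::real mat) \<in> carrier_mat n n" and p: "p < n" and z: "\<And>j. j < n \<Longrightarrow> A$$(p,j) = 0"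
  shows "det A = 0"
proof -
  have "A = mat\<^sub>r n n (\<lambda>i. if i = p then 0\<^sub>v n else row A i)"
    by (rule eq_matI) (use A z in auto)
  also have "det \<dots> = 0" by (rule det_row_0[OF p]) (use A in auto)
  finally show ?thesis .
qed

lemma std_step:
  assumes skA: "sk n A" and dA: "det A \<noteq> 0" and st: "std n k A" and kn: "2*k+2 \<le> n"
  shows "\<exists>N \<in> carrier_mat n n. det N \<noteq> 0 \<and> std n (k+1) (N * A * transpose_mat N)"
proof -
  define p where "p = 2*k"
  have Ac: "A \<in> carrier_mat n n" using skC[OF skA] .
  have pn: "p + 2 \<le> n" using kn p_def by simp
  have evp: "even p" unfolding p_def by simp
  obtain j0 where j0: "p < j0" "j0 < n" "A$$(p,j0) \<noteq> 0"
  proof (rule ccontr)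
    assume "\<not> thesis"
    with that have z: "\<And>j. p < j \<Longrightarrow> j < n \<Longrightarrow> A$$(p,j) = 0" by blast
    have "\<And>j. j < n \<Longrightarrow> A$$(p,j) = 0"
    proof -
      fix j assume j: "j < n"
      show "A$$(p,j) = 0"
      proof (cases "p < j")
        case True then show ?thesis using z j by simp
      next
        case False
        show ?thesis
        proof (cases "j = p")
          case True then show ?thesis using sk_diag[OF skA] j by simp
        next
          case False
          then have "j < p" using \<open>\<not> p < j\<close> by simp
          then have "A$$(p,j) = Jmat n $$ (p,j)" using stdD[OF st] j pn p_def by simp
          also have "\<dots> = 0" using J_cross(2)[of j k p n] \<open>j < p\<close> j pn p_def by simp
          finally show ?thesis .
        qed
      qed
    qed
    then have "det A = 0" using zero_row_det[OF Ac, of p] pn by simp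
    then show False using dA by simp
  qed
  define \<tau> where "\<tau> = Transposition.transpose (p+1) j0"
  have tau: "\<tau> permutes {0..<n}" unfolding \<tau>_def by (rule permutes_swap_id) (use j0 pn in auto)
  define P where "P = perm_m n \<tau>"
  have Pc: "P \<in> carrier_mat n n" and dP: "det P \<noteq> 0" using perm_m_det[OF tau] P_def by auto
  define A1 where "A1 = P * A * transpose_mat P"
  have A1e: "\<And>i j. i < n \<Longrightarrow> j < n \<Longrightarrow> A1$$(i,j) = A$$(\<tau> i, \<tau> j)"
    unfolding A1_def P_def by (rule perm_m_entry[OF Ac tau])
  have sk1: "sk n A1" unfolding A1_def by (rule cong_sk[OF skA Pc])
  have d1: "det A1 \<noteq> 0" unfolding A1_def using cong_det[OF Ac Pc] dA dP by simp
  have tsmall: "\<And>x. x < p \<Longrightarrow> \<tau> x = x" unfolding \<tau>_def using j0 by auto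
  have tbig: "\<And>x. p \<le> x \<Longrightarrow> x < n \<Longrightarrow> p \<le> \<tau> x \<and> \<tau> x < n"
    unfolding \<tau>_def using j0 pn by (auto simp: Transposition.transpose_def)
  have st1: "std n k A1"
    unfolding std_def
  proof (intro allI impI)
    fix i j assume i: "i < n" and j: "j < n" and ij: "i < 2*k \<or> j < 2*k"
    show "A1$$(i,j) = Jmat n $$ (i,j)"
    proof (cases "i < p")
      case True
      have "A1$$(i,j) = A$$(i, \<tau> j)" using A1e[OF i j] tsmall[OF True] by simp
      also have "\<dots> = Jmat n $$ (i, \<tau> j)" using stdD[OF st i] tbig[of j] tsmall[of j] j True p_def
        by (cases "j < p") auto
      also have "\<dots> = Jmat n $$ (i,j)"
      proof (cases "j < p")
        case True then show ?thesis using tsmall by simp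
      next
        case False
        then show ?thesis using J_cross(1)[of i k "\<tau> j" n] J_cross(1)[of i k j n] tbig[of j] \<open>i < p\<close> i j p_def
          by simp
      qed
      finally show ?thesis .
    next
      case False
      then have jp: "j < p" using ij p_def by simp
      have "A1$$(i,j) = A$$(\<tau> i, j)" using A1e[OF i j] tsmall[OF jp] by simp
      also have "\<dots> = Jmat n $$ (\<tau> i, j)" using stdD[OF st _ j] tbig[of i] i jp p_def False
        by simp
      also have "\<dots> = Jmat n $$ (i,j)"
        using J_cross(2)[of j k "\<tau> i" n] J_cross(2)[of j k i n] tbig[of i] False jp i j p_def
        by simp
      finally show ?thesis .
    qed
  qed
  have c: "A1$$(p,p+1) = A$$(p,j0)"
    using A1e[of p "p+1"] pn unfolding \<tau>_def using j0 by simp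
  define c where "c = A$$(p,j0)"
  have cnz: "c \<noteq> 0" using j0 c_def by simp
  define d where "d = (\<lambda>i. if i = p then 1/c else (1::real))"
  have dnz: "\<And>i. i < n \<Longrightarrow> d i \<noteq> 0" using cnz unfolding d_def by auto
  define D where "D = diag_m n d"
  have Dc: "D \<in> carrier_mat n n" and dD: "det D \<noteq> 0" using diag_m_det[OF dnz] D_def by auto
  have A1c: "A1 \<in> carrier_mat n n" using skC[OF sk1] .
  define A2 where "A2 = D * A1 * transpose_mat D"
  have A2e: "\<And>i j. i < n \<Longrightarrow> j < n \<Longrightarrow> A2$$(i,j) = d i * A1$$(i,j) * d j"
    unfolding A2_def D_def by (rule diag_m_entry[OF A1c])
  have sk2: "sk n A2" unfolding A2_def by (rule cong_sk[OF sk1 Dc])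
  have d2: "det A2 \<noteq> 0" unfolding A2_def using cong_det[OF A1c Dc] d1 dD by simp
  have st2: "std n k A2"
    unfolding std_def
  proof (intro allI impI)
    fix i j assume i: "i < n" and j: "j < n" and ij: "i < 2*k \<or> j < 2*k"
    have e: "A1$$(i,j) = Jmat n $$ (i,j)" using stdD[OF st1 i j ij] .
    show "A2$$(i,j) = Jmat n $$ (i,j)"
    proof (cases "i < p")
      case True
      have "d i = 1" using True unfolding d_def by simp
      moreover have "Jmat n $$ (i,j) * d j = Jmat n $$ (i,j)"
      proof (cases "j = p")
        case True then show ?thesis using J_cross(1)[of i k j n] \<open>i < p\<close> i j p_def by simp
      next
        case False then show ?thesis unfolding d_def by simp
      qed
      ultimately show ?thesis using A2e[OF i j] e by simp
    next
      case False
      then have jp: "j < p" using ij p_def by simp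
      have "d j = 1" using jp unfolding d_def by simp
      moreover have "d i * Jmat n $$ (i,j) = Jmat n $$ (i,j)"
      proof (cases "i = p")
        case True then show ?thesis using J_cross(2)[of j k i n] jp i j p_def by simp
      next
        case False then show ?thesis unfolding d_def by simp
      qed
      ultimately show ?thesis using A2e[OF i j] e by simp
    qed
  qed
  have one: "A2$$(p,p+1) = 1"
    using A2e[of p "p+1"] pn c cnz unfolding d_def c_def by simp
  define E where "E = elim_m n p A2"
  have Ec: "E \<in> carrier_mat n n" and dE: "det E \<noteq> 0" using elim_det[OF pn] E_def by auto
  have A2c: "A2 \<in> carrier_mat n n" using skC[OF sk2] .
  define A3 where "A3 = E * A2 * transpose_mat E"
  have A3e: "\<And>i j. i < p+2 \<Longrightarrow> j < n \<Longrightarrow> A3$$(i,j) =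
    A2$$(i,j) + (if p+2 \<le> j then - A2$$(j,p+1) * A2$$(i,p) + A2$$(j,p) * A2$$(i,p+1) else 0)"
    unfolding A3_def E_def by (rule elim_entry[OF A2c pn])
  have sk3: "sk n A3" unfolding A3_def by (rule cong_sk[OF sk2 Ec])
  have a2pp: "A2$$(p,p) = 0" "A2$$(p+1,p+1) = 0" using sk_diag[OF sk2] pn by auto
  have a2m: "A2$$(p+1,p) = -1" using skD[OF sk2, of p "p+1"] one pn by simp
  have half: "\<And>i j. i < p+2 \<Longrightarrow> j < n \<Longrightarrow> A3$$(i,j) = Jmat n $$ (i,j)"
  proof -
    fix i j assume i: "i < p+2" and j: "j < n"
    have i': "i < n" using i pn by simp
    show "A3$$(i,j) = Jmat n $$ (i,j)"
    proof (cases "j < p+2")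
      case True
      have "A3$$(i,j) = A2$$(i,j)" using A3e[OF i j] True by simp
      also have "\<dots> = Jmat n $$ (i,j)"
      proof (cases "i < p \<or> j < p")
        case True then show ?thesis using stdD[OF st2 i' j] p_def by auto
      next
        case False
        then have "i = p \<or> i = p+1" "j = p \<or> j = p+1" using i \<open>j < p+2\<close> by auto
        then show ?thesis using a2pp a2m one J_small[OF evp pn] by auto
      qed
      finally show ?thesis .
    next
      case False
      then have jb: "p+2 \<le> j" by simp
      have J0: "Jmat n $$ (i,j) = 0" using J_cross(1)[of i "k+1" j n] i jb i' j p_def by simp
      have "A3$$(i,j) = A2$$(i,j) - A2$$(j,p+1) * A2$$(i,p) + A2$$(j,p) * A2$$(i,p+1)"
        using A3e[OF i j] jb by simp
      also have "\<dots> = 0"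
      proof -
        consider "i < p" | "i = p" | "i = p+1" using i by linarith
        then show ?thesis
        proof cases
          case 1
          have "A2$$(i,j) = 0" using stdD[OF st2 i' j] 1 J_cross(1)[of i k j n] i' j jb p_def by simp
          moreover have "A2$$(i,p) = 0" using stdD[OF st2 i', of p] 1 J_cross(1)[of i k p n] i' pn p_def by simp
          moreover have "A2$$(i,p+1) = 0" using stdD[OF st2 i', of "p+1"] 1 J_cross(1)[of i k "p+1" n] i' pn p_def by simp
          ultimately show ?thesis by simp
        next
          case 2
          then show ?thesis using a2pp one skD[OF sk2, of p j] pn j by simp
        next
          case 3
          then show ?thesis using a2pp a2m skD[OF sk2, of "p+1" j] pn j by simp
        qed
      qed
      finally show ?thesis using J0 by simp
    qed
  qed
  have st3: "std n (k+1) A3"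
    unfolding std_def
  proof (intro allI impI)
    fix i j assume i: "i < n" and j: "j < n" and ij: "i < 2*(k+1) \<or> j < 2*(k+1)"
    show "A3$$(i,j) = Jmat n $$ (i,j)"
    proof (cases "i < p+2")
      case True then show ?thesis using half j by simp
    next
      case False
      then have jp: "j < p+2" using ij p_def by simp
      have "A3$$(i,j) = - A3$$(j,i)" using skD[OF sk3 j i] .
      also have "\<dots> = - Jmat n $$ (j,i)" using half[OF jp i] by simp
      also have "\<dots> = Jmat n $$ (i,j)" using skD[OF J_sk j i] by simp
      finally show ?thesis .
    qed
  qed
  define N where "N = E * (D * P)"
  have Nc: "N \<in> carrier_mat n n" unfolding N_def using Ec Dc Pc by simp
  have dN: "det N \<noteq> 0" unfolding N_def using det_mult[OF Ec, of "D * P"] det_mult[OF Dc Pc] Dc Pc dE dD dP by simp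
  have "A3 = N * A * transpose_mat N"
  proof -
    have "A2 = (D * P) * A * transpose_mat (D * P)"
      unfolding A2_def A1_def by (rule cong_comp[OF Ac Pc Dc])
    then have "A3 = E * ((D * P) * A * transpose_mat (D * P)) * transpose_mat E"
      unfolding A3_def by simp
    also have "\<dots> = N * A * transpose_mat N"
      unfolding N_def by (rule cong_comp[OF Ac _ Ec]) (use Dc Pc in simp)
    finally show ?thesis .
  qed
  then show ?thesis using Nc dN st3 by auto
qed



lemma canon_aux:
  "n = 2*L \<Longrightarrow> L - k = m \<Longrightarrow> k \<le> L \<Longrightarrow> sk n A \<Longrightarrow> det A \<noteq> 0 \<Longrightarrow> std n k A \<Longrightarrow>
   \<exists>N \<in> carrier_mat n n. det N \<noteq> 0 \<and> N * A * transpose_mat N = Jmat n"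
proof (induction m arbitrary: k A)
  case 0
  then have k: "k = L" by simp
  have Ac: "A \<in> carrier_mat n n" using skC[OF 0(4)] .
  have "A = Jmat n"
  proof (rule eq_matI)
    fix i j assume "i < dim_row (Jmat n)" "j < dim_col (Jmat n)"
    then have "i < n" "j < n" by (auto simp: Jmat_def)
    then show "A $$ (i,j) = Jmat n $$ (i,j)" using stdD[OF 0(6)] k 0(1) by simp
  qed (use Ac in \<open>auto simp: Jmat_def\<close>)
  moreover have "1\<^sub>m n * A * transpose_mat (1\<^sub>m n) = A" using Ac by simp
  ultimately show ?case by (intro bexI[of _ "1\<^sub>m n"]) auto
next
  case (Suc m)
  have kn: "2*k+2 \<le> n" using Suc.prems by simp
  have Ac: "A \<in> carrier_mat n n" using skC[OF Suc.prems(4)] .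
  obtain N1 where N1: "N1 \<in> carrier_mat n n" "det N1 \<noteq> 0" "std n (k+1) (N1 * A * transpose_mat N1)"
    using std_step[OF Suc.prems(4,5,6) kn] by blast
  let ?A1 = "N1 * A * transpose_mat N1"
  have sk1: "sk n ?A1" by (rule cong_sk[OF Suc.prems(4) N1(1)])
  have d1: "det ?A1 \<noteq> 0" using cong_det[OF Ac N1(1)] Suc.prems(5) N1(2) by simp
  have km: "L - (k+1) = m" "k+1 \<le> L" using Suc.prems(2,3) by auto
  obtain N2 where N2: "N2 \<in> carrier_mat n n" "det N2 \<noteq> 0" "N2 * ?A1 * transpose_mat N2 = Jmat n"
    using Suc.IH[OF Suc.prems(1) km sk1 d1 N1(3)] by blast
  have "(N2 * N1) * A * transpose_mat (N2 * N1) = Jmat n"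
    using cong_comp[OF Ac N1(1) N2(1)] N2(3) by simp
  moreover have "N2 * N1 \<in> carrier_mat n n" using N1 N2 by simp
  moreover have "det (N2 * N1) \<noteq> 0" using det_mult[OF N2(1) N1(1)] N1 N2 by simp
  ultimately show ?case by blast
qed

lemma canon:
  assumes "sk (2*L) A" "det A \<noteq> 0"
  shows "\<exists>N \<in> carrier_mat (2*L) (2*L). det N \<noteq> 0 \<and> N * A * transpose_mat N = Jmat (2*L)"
  by (rule canon_aux[OF refl refl _ assms]) (auto simp: std_def)

theorem proposition3p3:
  fixes L :: nat and A0 A1 :: "real mat"
  assumes "skew_symmetric_mat (2*L) A0" and "skew_symmetric_mat (2*L) A1"
    and "invertible_mat A0" and "invertible_mat A1"
  shows "kitaev_index L A0 = kitaev_index L A1 \<longleftrightarrow> spectral_flow2 (2*L) A0 A1 = 1"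
proof -
  define n where "n = 2*L"
  have sk0: "sk n A0" and sk1: "sk n A1" using skew_sk assms(1,2) n_def by auto
  have A0c: "A0 \<in> carrier_mat n n" and A1c: "A1 \<in> carrier_mat n n" using skC sk0 sk1 by auto
  have d0: "det A0 \<noteq> 0" using inv_iff_det[OF A0c] assms(3) by simp
  have d1: "det A1 \<noteq> 0" using inv_iff_det[OF A1c] assms(4) by simp
  obtain N0 where N0: "N0 \<in> carrier_mat n n" "det N0 \<noteq> 0" "N0 * A0 * transpose_mat N0 = Jmat n"
    using canon[of L A0] sk0 d0 n_def by auto
  obtain N1 where N1: "N1 \<in> carrier_mat n n" "det N1 \<noteq> 0" "N1 * A1 * transpose_mat N1 = Jmat n"
    using canon[of L A1] sk1 d1 n_def by auto
  obtain Ni where Ni: "Ni \<in> carrier_mat n n" "Ni * N1 = 1\<^sub>m n" "N1 * Ni = 1\<^sub>m n"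
    using inverse_exists[OF N1(1,2)] by blast
  have pf0: "pf_sum L A0 \<noteq> 0"
  proof
    assume "pf_sum L A0 = 0"
    then have "pf_sum L (Jmat (2*L)) = 0"
      using pf_sum_congruence[of A0 L N0] A0c N0 n_def by simp
    then show False using pf_sum_J_pos[of L] by simp
  qed
  have ex: "\<exists>M. M \<in> carrier_mat n n \<and> invertible_mat M \<and> A1 = M * A0 * transpose_mat M"
  proof (intro exI conjI)
    show Mc: "Ni * N0 \<in> carrier_mat n n" using Ni N0 by simp
    have "det Ni * det N1 = 1" using det_mult[OF Ni(1) N1(1)] Ni(2) by simp
    then have "det Ni \<noteq> 0" by auto
    then have "det (Ni * N0) \<noteq> 0" using det_mult[OF Ni(1) N0(1)] N0(2) by simp
    then show "invertible_mat (Ni * N0)" using inv_iff_det[OF Mc] by simp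
    have "Ni * Jmat n * transpose_mat Ni = (Ni * N1) * A1 * transpose_mat (Ni * N1)"
      using cong_comp[OF A1c N1(1) Ni(1)] N1(3) by simp
    also have "\<dots> = A1" using Ni(2) A1c by simp
    finally have e1: "A1 = Ni * Jmat n * transpose_mat Ni" by simp
    also have "\<dots> = (Ni * N0) * A0 * transpose_mat (Ni * N0)"
      using cong_comp[OF A0c N0(1) Ni(1)] N0(3) by simp
    finally show "A1 = (Ni * N0) * A0 * transpose_mat (Ni * N0)" .
  qed
  define M where "M = (SOME M. M \<in> carrier_mat n n \<and> invertible_mat M \<and> A1 = M * A0 * transpose_mat M)"
  have M: "M \<in> carrier_mat n n" "invertible_mat M" "A1 = M * A0 * transpose_mat M"
    using someI_ex[OF ex] unfolding M_def by blast+
  have sf: "spectral_flow2 (2*L) A0 A1 = sgn (det M)"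
    unfolding spectral_flow2_def M_def n_def by simp
  have dM: "det M \<noteq> 0" using inv_iff_det[OF M(1)] M(2) by simp
  have pf1: "pf_sum L A1 = det M * pf_sum L A0"
    using pf_sum_congruence[of A0 L M] A0c M n_def by simp
  have c: "(2::real) ^ L * fact L > 0" by simp
  have kit: "\<And>A. kitaev_index L A = sgn (pf_sum L A)"
    unfolding kitaev_index_def pfaffian_pf_sum using c by (simp add: sgn_divide)
  have sx: "sgn (pf_sum L A0) \<noteq> 0" using pf0 sgn_zero_iff by blast
  show ?thesis unfolding kit sf pf1 sgn_mult
    using sx by auto
qed


end
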